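(* Let $\mathcal{F}=(A,R)$ and $\mathcal{G}=(A,R')$ be argumentation frameworks with $R\subseteq R'$ and $\mathrm{conf}(\mathcal{F})=\mathrm{conf}(\mathcal{G})$, and let $S\in\mathit{cf1.5}(\mathcal{F})$. Then $S\in\mathit{cf1.5}(\mathcal{G})$. In particular, $\mathit{cf1.5}$ is both $\preceq^E_\cap$-skepticism adequate and $\preceq^E_W$-skepticism adequate.
   Context: An argumentation framework (AF) is $\mathcal{F}=(A_{\mathcal{F}},R_{\mathcal{F}})$ with $R_{\mathcal{F}}\subseteq A_{\mathcal{F}}\times A_{\mathcal{F}}$ (possibly infinite); $a\rightarrow b$ means $(a,b)\in R_{\mathcal{F}}$. $\mathrm{conf}(\mathcal{F})=\{(x,y):(x,y)\in R_{\mathcal{F}}\text{ or }(y,x)\in R_{\mathcal{F}}\}$. $\tau_1\preceq^E_\cap\tau_2$ iff $\bigcap_{S_1\in\tau_1}S_1\subseteq\bigcap_{S_2\in\tau_2}S_2$; $\tau_1\preceq^E_W\tau_2$ iff for every $S_2\in\tau_2$ there is $S_1\in\tau_1$ with $S_1\subseteq S_2$. A semantics $\sigma$ is $\preceq$-skepticism adequate if for any AFs $\mathcal{F},\mathcal{G}$ on the same argument set with $R_{\mathcal{F}}\supseteq R_{\mathcal{G}}$ and $\mathrm{conf}(\mathcal{F})=\mathrm{conf}(\mathcal{G})$, $\sigma(\mathcal{F})\preceq\sigma(\mathcal{G})$. $\mathcal{F}|_B=(A_{\mathcal{F}}\cap B,R_{\mathcal{F}}\cap(B\times B))$. Conflict-free: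 no $a,b\in S$ with $a\rightarrow b$; naive: $\subseteq$-maximal conflict-free. $\mathrm{SCC}(\mathcal{F})$: strongly connected components of the attack graph. $D_S(X)=\{b\in X:\exists a\in S\setminus X,\ a\rightarrow b\}$ (attacks taken in the framework under consideration). $S\in\mathit{cf1.5}(\mathcal{F})$ iff $S$ is conflict-free and for each $X\in\mathrm{SCC}(\mathcal{F})$, $S\cap X$ is a naive extension of $\mathcal{F}|_{X\setminus D_S(X)}$. *)

theory Defs
  imports Main
begin

definition AF :: "'a set \<Rightarrow> ('a \<times> 'a) set \<Rightarrow> bool" where
  "AF A R \<longleftrightarrow> R \<subseteq> A \<times> A"

definition conf :: "('a \<times> 'a) set \<Rightarrow> ('a \<times> 'a) set" where
  "conf R = {(x, y). (x, y) \<in> R \<or> (y, x) \<in> R}"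

definition restr_args :: "'a set \<Rightarrow> 'a set \<Rightarrow> 'a set" where
  "restr_args A B = A \<inter> B"

definition restr_att :: "('a \<times> 'a) set \<Rightarrow> 'a set \<Rightarrow> ('a \<times> 'a) set" where
  "restr_att R B = R \<inter> (B \<times> B)"

definition conflict_free :: "'a set \<Rightarrow> ('a \<times> 'a) set \<Rightarrow> 'a set \<Rightarrow> bool" where
  "conflict_free A R S \<longleftrightarrow> S \<subseteq> A \<and> (\<forall>a\<in>S. \<forall>b\<in>S. (a, b) \<notin> R)"

definition naive :: "'a set \<Rightarrow> ('a \<times> 'a) set \<Rightarrow> 'a set \<Rightarrow> bool" where
  "naive A R S \<longleftrightarrow> conflict_free A R S \<and>
     (\<forall>T. conflict_free A R T \<and> S \<subseteq> T \<longrightarrow> T = S)"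

definition SCCs :: "'a set \<Rightarrow> ('a \<times> 'a) set \<Rightarrow> 'a set set" where
  "SCCs A R = {{b \<in> A. (a, b) \<in> R\<^sup>* \<and> (b, a) \<in> R\<^sup>*} | a. a \<in> A}"

definition D :: "('a \<times> 'a) set \<Rightarrow> 'a set \<Rightarrow> 'a set \<Rightarrow> 'a set" where
  "D R S X = {b \<in> X. \<exists>a \<in> S - X. (a, b) \<in> R}"

definition cf15 :: "'a set \<Rightarrow> ('a \<times> 'a) set \<Rightarrow> 'a set set" where
  "cf15 A R = {S. conflict_free A R S \<and>
     (\<forall>X \<in> SCCs A R. naive (restr_args A (X - D R S X)) (restr_att R (X - D R S X)) (S \<inter> X))}"

definition le_cap :: "'a set set \<Rightarrow> 'a set set \<Rightarrow> bool" where
  "le_cap \<tau>1 \<tau>2 \<longleftrightarrow> \<Inter>\<tau>1 \<subseteq> \<Inter>\<tau>2"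

definition le_W :: "'a set set \<Rightarrow> 'a set set \<Rightarrow> bool" where
  "le_W \<tau>1 \<tau>2 \<longleftrightarrow> (\<forall>S2\<in>\<tau>2. \<exists>S1\<in>\<tau>1. S1 \<subseteq> S2)"

definition skepticism_adequate ::
  "('a set set \<Rightarrow> 'a set set \<Rightarrow> bool) \<Rightarrow> ('a set \<Rightarrow> ('a \<times> 'a) set \<Rightarrow> 'a set set) \<Rightarrow> bool" where
  "skepticism_adequate le \<sigma> \<longleftrightarrow>
     (\<forall>A RF RG. AF A RF \<and> AF A RG \<and> RG \<subseteq> RF \<and> conf RF = conf RG \<longrightarrow>
        le (\<sigma> A RF) (\<sigma> A RG))"

end

theory Submission
  imports Defs
begin

lemma main16:
  fixes A :: "'a set" and R R' :: "('a \<times> 'a) set" and S :: "'a set"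
  assumes "R \<subseteq> R'" and "conf R = conf R'"
    and "S \<in> cf15 A R"
  shows "S \<in> cf15 A R'"
proof -
  have cfS: "conflict_free A R S" using assms(3) by (simp add: cf15_def)
  have nv: "\<And>X. X \<in> SCCs A R \<Longrightarrow> naive (restr_args A (X - D R S X)) (restr_att R (X - D R S X)) (S \<inter> X)"
    using assms(3) by (simp add: cf15_def)
  have R'R: "\<And>x y. (x,y) \<in> R' \<Longrightarrow> (x,y) \<in> R \<or> (y,x) \<in> R"
  proof -
    fix x y assume "(x,y) \<in> R'"
    then have "(x,y) \<in> conf R'" by (simp add: conf_def)
    then have "(x,y) \<in> conf R" using assms(2) by simp
    then show "(x,y) \<in> R \<or> (y,x) \<in> R" by (simp add: conf_def)
  qed
  have cfS': "conflict_free A R' S" using cfS R'R unfolding conflict_free_def by blast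
  have rt: "R\<^sup>* \<subseteq> R'\<^sup>*" using assms(1) by (simp add: rtrancl_mono)
  show ?thesis unfolding cf15_def
  proof (intro CollectI conjI ballI cfS')
    fix X' assume "X' \<in> SCCs A R'"
    then obtain a' where a': "a' \<in> A" and X'd: "X' = {b \<in> A. (a', b) \<in> R'\<^sup>* \<and> (b, a') \<in> R'\<^sup>*}"
      unfolding SCCs_def by blast
    let ?D = "D R' S X'"
    have sub: "S \<inter> X' \<subseteq> restr_args A (X' - ?D)"
      using cfS' R'R unfolding conflict_free_def D_def restr_args_def by blast
    have cf1: "conflict_free (restr_args A (X' - ?D)) (restr_att R' (X' - ?D)) (S \<inter> X')"
      using sub cfS' unfolding conflict_free_def restr_att_def by blast
    show "naive (restr_args A (X' - ?D)) (restr_att R' (X' - ?D)) (S \<inter> X')"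
      unfolding naive_def
    proof (intro conjI cf1 allI impI)
      fix T assume T: "conflict_free (restr_args A (X' - ?D)) (restr_att R' (X' - ?D)) T \<and> S \<inter> X' \<subseteq> T"
      show "T = S \<inter> X'"
      proof (rule ccontr)
        assume "T \<noteq> S \<inter> X'"
        then obtain b where bT: "b \<in> T" and bn: "b \<notin> S \<inter> X'" using T by blast
        have bA: "b \<in> A" and bX': "b \<in> X'" and bD: "b \<notin> ?D"
          using T bT unfolding conflict_free_def restr_args_def by auto
        have bS: "b \<notin> S" using bn bX' by blast
        have noconf: "\<And>s. s \<in> S \<inter> X' \<Longrightarrow> (b,s) \<notin> R' \<and> (s,b) \<notin> R'"
          using T bT bX' bD sub unfolding conflict_free_def restr_att_def restr_args_def by blast
        have noself: "(b,b) \<notin> R'"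
          using T bT bX' bD unfolding conflict_free_def restr_att_def by blast
        define X where "X = {c \<in> A. (b, c) \<in> R\<^sup>* \<and> (c, b) \<in> R\<^sup>*}"
        have XS: "X \<in> SCCs A R" unfolding X_def SCCs_def using bA by blast
        have bX: "b \<in> X" unfolding X_def using bA by simp
        have XX': "X \<subseteq> X'"
        proof
          fix c assume "c \<in> X"
          then have "c \<in> A" "(b,c) \<in> R'\<^sup>*" "(c,b) \<in> R'\<^sup>*" unfolding X_def using rt by auto
          moreover have "(a',b) \<in> R'\<^sup>*" "(b,a') \<in> R'\<^sup>*" using bX' X'd by auto
          ultimately show "c \<in> X'" unfolding X'd
            using rtrancl_trans by fastforce
        qed
        show False
        proof (cases "b \<in> D R S X")
          case True
          then obtain a where "a \<in> S - X" "(a,b) \<in> R" unfolding D_def by blast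
          then have "a \<in> X'" using bD bX' assms(1) unfolding D_def by blast
          then show False using noconf \<open>a \<in> S - X\<close> \<open>(a,b) \<in> R\<close> assms(1) by blast
        next
          case False
          let ?B = "X - D R S X"
          have nvX: "naive (restr_args A ?B) (restr_att R ?B) (S \<inter> X)" using nv XS .
          have cf0: "conflict_free (restr_args A ?B) (restr_att R ?B) (insert b (S \<inter> X))"
            using nvX bA bX False noconf noself XX' assms(1)
            unfolding naive_def conflict_free_def restr_args_def restr_att_def by blast
          then have "insert b (S \<inter> X) = S \<inter> X" using nvX unfolding naive_def by blast
          then show False using bS by blast
        qed
      qed
    qed
  qed
qed

theorem theorem16:
  fixes A :: "'a set" and R R' :: "('a \<times> 'a) set" and S :: "'a set"
  assumes "AF A R" and "AF A R'"
    and "R \<subseteq> R'" and "conf R = conf R'"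
    and "S \<in> cf15 A R"
  shows "S \<in> cf15 A R' \<and> skepticism_adequate le_cap (cf15 :: 'a set \<Rightarrow> _)
         \<and> skepticism_adequate le_W (cf15 :: 'a set \<Rightarrow> _)"
proof -
  have sub: "\<And>A RF RG. RG \<subseteq> RF \<Longrightarrow> conf RF = conf RG \<Longrightarrow> cf15 A RG \<subseteq> cf15 (A::'a set) RF"
    using main16 by (metis subsetI)
  have "skepticism_adequate le_cap (cf15 :: 'a set \<Rightarrow> _)"
    unfolding skepticism_adequate_def le_cap_def
  proof (intro allI impI)
    fix A :: "'a set" and RF RG assume h: "AF A RF \<and> AF A RG \<and> RG \<subseteq> RF \<and> conf RF = conf RG"
    then have "cf15 A RG \<subseteq> cf15 A RF" using sub by simp
    then show "\<Inter> (cf15 A RF) \<subseteq> \<Inter> (cf15 A RG)" by blast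
  qed
  moreover have "skepticism_adequate le_W (cf15 :: 'a set \<Rightarrow> _)"
    unfolding skepticism_adequate_def le_W_def
  proof (intro allI impI)
    fix A :: "'a set" and RF RG assume h: "AF A RF \<and> AF A RG \<and> RG \<subseteq> RF \<and> conf RF = conf RG"
    then have "cf15 A RG \<subseteq> cf15 A RF" using sub by simp
    then show "\<forall>S2\<in>cf15 A RG. \<exists>S1\<in>cf15 A RF. S1 \<subseteq> S2" by blast
  qed
  ultimately show ?thesis using main16 assms by blast
qed

end
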